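(* Let $\Phi_1,\dots,\Phi_N$ be quantum channels on $\mathcal L(\mathbb C^d)$ and $1\le K\le N$. For a subset $S\subseteq[N]$ with $|S|=K$ and orthonormal bases $\mathbf e=(\mathbf e^{(i)})_{i\in S}$ of $\mathbb C^d$, let $$\mathrm{val}(\mathbf\Phi,S,\mathbf e):=\min\{\operatorname{Tr}H:\ H \text{ Hermitian},\ H\ge G_{\Phi_i,\mathbf e^{(i)}}\ \forall i\in S\}.$$ If there exist at least one $K$-subset $S\subseteq[N]$ and bases $\mathbf e$ with $\mathrm{val}(\mathbf\Phi,S,\mathbf e)>d$, then $(\Phi_1,\dots,\Phi_N)$ is $(N,K)$-incompatible. If for every $K$-subset $S\subseteq[N]$ there exist bases $\mathbf e_S$ with $\mathrm{val}(\mathbf\Phi,S,\mathbf e_S)>d$, then $(\Phi_1,\dots,\Phi_N)$ is $(N,K)$-strong incompatible.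
   Context: A family of channels $(\Phi_i)_{i\in S}$ on $\mathcal L(\mathbb C^d)$ is compatible if there is a completely positive trace-preserving $\Lambda:\mathcal L(\mathbb C^d)\to\mathcal L((\mathbb C^d)^{\otimes |S|})$ whose marginal on the factor labelled $i$ is $\Phi_i$ for every $i\in S$. The $N$-tuple is $(N,K)$-incompatible if at least one $K$-subset of the channels is incompatible, and $(N,K)$-strong incompatible if all $K$-subsets are incompatible. For $X=\sum X_{ij}|i\rangle\langle j|$, $|X\rangle:=\sum X_{ij}|i\rangle\otimes|j\rangle$; for a channel $\Phi$ with Hilbert–Schmidt adjoint $\Phi^*$ and orthonormal basis $\mathbf e=(e_i)$, $G_{\Phi,\mathbf e}:=\sum_{i=1}^d |\Phi^*(|e_i\rangle\langle e_i|)\rangle\langle\Phi^*(|e_i\rangle\langle e_i|)|/\operatorname{Tr}\Phi^*(|e_i\rangle\langle e_i|)$ (zero-denominator terms omitted). *)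

theory Defs
  imports "HOL-Analysis.Analysis"
begin

text \<open>An operator (matrix) on a finite-dimensional Hilbert space with a
finite orthonormal index set I is represented by its matrix entries
'i => 'i => complex; only the entries on I x I are meaningful.
C^d uses the index set {..<d} (nat).  A linear map from operators on I to operators on J
is represented by its coefficient kernel c, acting by
(apply_map I c X) j j' = sum over i, i' in I of c j j' i i' * X i i'.
Every linear map has exactly one such kernel (restricted to the carriers).\<close>

type_synonym 'i mat = "'i \<Rightarrow> 'i \<Rightarrow> complex"
type_synonym ('j, 'i) lmap = "'j \<Rightarrow> 'j \<Rightarrow> 'i \<Rightarrow> 'i \<Rightarrow> complex"

definition apply_map :: "'i set \<Rightarrow> ('j, 'i) lmap \<Rightarrow> 'i mat \<Rightarrow> 'j mat" where
  "apply_map I c X = (\<lambda>j j'. \<Sum>i\<in>I. \<Sum>i'\<in>I. c j j' i i' * X i i')"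

definition mtrace :: "'i set \<Rightarrow> 'i mat \<Rightarrow> complex" where
  "mtrace I X = (\<Sum>i\<in>I. X i i)"

definition hermitian_on :: "'i set \<Rightarrow> 'i mat \<Rightarrow> bool" where
  "hermitian_on I H \<longleftrightarrow> (\<forall>x\<in>I. \<forall>y\<in>I. H x y = cnj (H y x))"

definition psd_on :: "'i set \<Rightarrow> 'i mat \<Rightarrow> bool" where
  "psd_on I A \<longleftrightarrow> (\<forall>v :: 'i \<Rightarrow> complex.
      let q = (\<Sum>x\<in>I. \<Sum>y\<in>I. cnj (v x) * A x y * v y) in Im q = 0 \<and> 0 \<le> Re q)"

text \<open>Complete positivity: id_n tensor Phi maps PSD operators to PSD operators, for all n.\<close>
definition completely_positive :: "'i set \<Rightarrow> 'j set \<Rightarrow> ('j, 'i) lmap \<Rightarrow> bool" where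
  "completely_positive I J c \<longleftrightarrow>
     (\<forall>(n::nat) (X :: (nat \<times> 'i) mat). psd_on ({..<n} \<times> I) X \<longrightarrow>
        psd_on ({..<n} \<times> J)
          (\<lambda>(a, j) (a', j'). \<Sum>i\<in>I. \<Sum>i'\<in>I. c j j' i i' * X (a, i) (a', i')))"

definition trace_preserving :: "'i set \<Rightarrow> 'j set \<Rightarrow> ('j, 'i) lmap \<Rightarrow> bool" where
  "trace_preserving I J c \<longleftrightarrow> (\<forall>X. mtrace J (apply_map I c X) = mtrace I X)"

definition channel :: "'i set \<Rightarrow> 'j set \<Rightarrow> ('j, 'i) lmap \<Rightarrow> bool" where
  "channel I J c \<longleftrightarrow> completely_positive I J c \<and> trace_preserving I J c"

text \<open>Index set of (C^d)^{tensor S}: multi-indices f : S -> {..<d}.\<close>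
definition tens_idx :: "nat \<Rightarrow> nat set \<Rightarrow> (nat \<Rightarrow> nat) set" where
  "tens_idx d S = PiE S (\<lambda>_. {..<d})"

text \<open>Marginal on the factor labelled i: partial trace over all factors in S - {i}.\<close>
definition marginal :: "nat \<Rightarrow> nat set \<Rightarrow> nat \<Rightarrow> (nat \<Rightarrow> nat) mat \<Rightarrow> nat mat" where
  "marginal d S i Y = (\<lambda>a b. \<Sum>h\<in>tens_idx d (S - {i}). Y (h(i := a)) (h(i := b)))"

definition compatible :: "nat \<Rightarrow> nat set \<Rightarrow> (nat \<Rightarrow> (nat, nat) lmap) \<Rightarrow> bool" where
  "compatible d S \<Phi> \<longleftrightarrow>
     (\<exists>\<Lambda> :: (nat \<Rightarrow> nat, nat) lmap. channel {..<d} (tens_idx d S) \<Lambda> \<and>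
        (\<forall>i\<in>S. \<forall>X. \<forall>a<d. \<forall>b<d.
           marginal d S i (apply_map {..<d} \<Lambda> X) a b = apply_map {..<d} (\<Phi> i) X a b))"

definition NK_incompatible :: "nat \<Rightarrow> nat \<Rightarrow> nat \<Rightarrow> (nat \<Rightarrow> (nat, nat) lmap) \<Rightarrow> bool" where
  "NK_incompatible d N K \<Phi> \<longleftrightarrow>
     (\<exists>S. S \<subseteq> {1..N} \<and> card S = K \<and> \<not> compatible d S \<Phi>)"

definition NK_strong_incompatible :: "nat \<Rightarrow> nat \<Rightarrow> nat \<Rightarrow> (nat \<Rightarrow> (nat, nat) lmap) \<Rightarrow> bool" where
  "NK_strong_incompatible d N K \<Phi> \<longleftrightarrow>
     (\<forall>S. S \<subseteq> {1..N} \<and> card S = K \<longrightarrow> \<not> compatible d S \<Phi>)"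

text \<open>Hilbert-Schmidt adjoint: Tr(Y^* Phi(X)) = Tr(adj(Y)^* X).\<close>
definition hs_adjoint :: "'j set \<Rightarrow> ('j, 'i) lmap \<Rightarrow> 'j mat \<Rightarrow> 'i mat" where
  "hs_adjoint J c Y = (\<lambda>i i'. \<Sum>j\<in>J. \<Sum>j'\<in>J. cnj (c j j' i i') * Y j j')"

definition onb :: "nat \<Rightarrow> (nat \<Rightarrow> nat \<Rightarrow> complex) \<Rightarrow> bool" where
  "onb d e \<longleftrightarrow> (\<forall>k<d. \<forall>l<d. (\<Sum>a<d. cnj (e k a) * e l a) = (if k = l then 1 else 0))"

definition ketbra :: "(nat \<Rightarrow> complex) \<Rightarrow> nat mat" where
  "ketbra v = (\<lambda>a b. v a * cnj (v b))"

text \<open>|X><X| for the vectorisation |X> = sum X_ij |i> (x) |j>, indexed by pairs (i,j).\<close>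
definition vec_outer :: "nat mat \<Rightarrow> (nat \<times> nat) mat" where
  "vec_outer X = (\<lambda>(i, j) (i', j'). X i j * cnj (X i' j'))"

definition G_mat :: "nat \<Rightarrow> (nat, nat) lmap \<Rightarrow> (nat \<Rightarrow> nat \<Rightarrow> complex) \<Rightarrow> (nat \<times> nat) mat" where
  "G_mat d \<Phi> e = (\<lambda>p q. \<Sum>k\<in>{k. k < d \<and> mtrace {..<d} (hs_adjoint {..<d} \<Phi> (ketbra (e k))) \<noteq> 0}.
      vec_outer (hs_adjoint {..<d} \<Phi> (ketbra (e k))) p q
        / mtrace {..<d} (hs_adjoint {..<d} \<Phi> (ketbra (e k))))"

text \<open>val(Phi, S, e) = min { Tr H : H Hermitian on C^d (x) C^d, H >= G_{Phi_i, e^(i)} for i in S };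
  rendered as the infimum (the minimum is attained).\<close>
definition sdp_val :: "nat \<Rightarrow> (nat \<Rightarrow> (nat, nat) lmap) \<Rightarrow> nat set \<Rightarrow> (nat \<Rightarrow> nat \<Rightarrow> nat \<Rightarrow> complex) \<Rightarrow> real" where
  "sdp_val d \<Phi> S e = Inf {Re (mtrace ({..<d} \<times> {..<d}) H) | H.
      hermitian_on ({..<d} \<times> {..<d}) H \<and>
      (\<forall>i\<in>S. psd_on ({..<d} \<times> {..<d}) (\<lambda>p q. H p q - G_mat d (\<Phi> i) (e i) p q))}"

end

theory Submission
  imports Defs "Jordan_Normal_Form.Determinant"
begin


lemma onb_complete:
  assumes "onb d e" "a < d" "b < d"
  shows "(\<Sum>k<d. e k a * cnj (e k b)) = (if a = b then 1 else 0)"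
proof -
  define U :: "complex mat" where "U = mat d d (\<lambda>(a,k). e k a)"
  define V :: "complex mat" where "V = mat d d (\<lambda>(k,a). cnj (e k a))"
  have U: "U \<in> carrier_mat d d" and V: "V \<in> carrier_mat d d" by (auto simp: U_def V_def)
  have "V * U = 1\<^sub>m d"
  proof (rule eq_matI)
    fix k l assume kl: "k < dim_row (1\<^sub>m d)" "l < dim_col (1\<^sub>m d)"
    have "(V * U) $$ (k, l) = (\<Sum>a<d. cnj (e k a) * e l a)"
      using kl by (simp add: U_def V_def scalar_prod_def atLeast0LessThan)
    also have "\<dots> = 1\<^sub>m d $$ (k, l)" using assms(1) kl by (simp add: onb_def)
    finally show "(V * U) $$ (k, l) = 1\<^sub>m d $$ (k, l)" .
  qed (auto simp: U_def V_def)
  hence "U * V = 1\<^sub>m d" using mat_mult_left_right_inverse[OF V U] by simp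
  hence "(U * V) $$ (a, b) = 1\<^sub>m d $$ (a, b)" by simp
  thus ?thesis using assms by (simp add: U_def V_def scalar_prod_def atLeast0LessThan)
qed

definition qf :: "'i set \<Rightarrow> ('i \<Rightarrow> 'i \<Rightarrow> complex) \<Rightarrow> ('i \<Rightarrow> complex) \<Rightarrow> complex" where
  "qf I A v = (\<Sum>x\<in>I. \<Sum>y\<in>I. cnj (v x) * A x y * v y)"

lemma psd_on_qf: "psd_on I A \<longleftrightarrow> (\<forall>v. Im (qf I A v) = 0 \<and> 0 \<le> Re (qf I A v))"
  by (simp add: psd_on_def qf_def Let_def)

lemma sum_one_prod0: "(\<Sum>p\<in>{0::nat}\<times>I. g p) = (\<Sum>i\<in>I. g (0, i))"
proof -
  have "{0::nat}\<times>I = (\<lambda>i. (0,i)) ` I" by auto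
  moreover have "inj_on (\<lambda>i. (0::nat,i)) I" by (auto simp: inj_on_def)
  ultimately show ?thesis by (simp add: sum.reindex)
qed

lemma sum_one_prod: "(\<Sum>p\<in>{..<1::nat}\<times>I. g p) = (\<Sum>i\<in>I. g (0, i))"
  "(\<Sum>p\<in>{..<Suc 0}\<times>I. g p) = (\<Sum>i\<in>I. g (0, i))"
  using sum_one_prod0[where I=I and g=g] by (simp_all add: lessThan_Suc)

lemma cp_pos:
  assumes "completely_positive I J c" "psd_on I Y"
  shows "psd_on J (apply_map I c Y)"
proof -
  define X :: "(nat \<times> _) \<Rightarrow> (nat \<times> _) \<Rightarrow> complex" where "X = (\<lambda>(a, i) (a', i'). Y i i')"
  have "psd_on ({..<1} \<times> I) X"
    unfolding psd_on_qf
  proof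
    fix v :: "nat \<times> _ \<Rightarrow> complex"
    have "qf ({..<1} \<times> I) X v = qf I Y (\<lambda>i. v (0, i))"
      by (simp add: qf_def sum_one_prod X_def)
    thus "Im (qf ({..<1} \<times> I) X v) = 0 \<and> 0 \<le> Re (qf ({..<1} \<times> I) X v)"
      using assms(2) by (simp add: psd_on_qf)
  qed
  hence P: "psd_on ({..<1} \<times> J) (\<lambda>(a, j) (a', j'). \<Sum>i\<in>I. \<Sum>i'\<in>I. c j j' i i' * X (a, i) (a', i'))"
    using assms(1) unfolding completely_positive_def by blast
  show ?thesis
    unfolding psd_on_qf
  proof
    fix w :: "_ \<Rightarrow> complex"
    have "qf J (apply_map I c Y) w = qf ({..<1} \<times> J) (\<lambda>(a, j) (a', j'). \<Sum>i\<in>I. \<Sum>i'\<in>I. c j j' i i' * X (a, i) (a', i')) (\<lambda>(a,j). w j)"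
      by (simp add: qf_def sum_one_prod X_def apply_map_def)
    thus "Im (qf J (apply_map I c Y) w) = 0 \<and> 0 \<le> Re (qf J (apply_map I c Y) w)"
      using P by (simp add: psd_on_qf)
  qed
qed

lemma apply_E:
  assumes "finite I" "a \<in> I" "a' \<in> I"
  shows "apply_map I c (\<lambda>x y. if x = a \<and> y = a' then 1 else 0) j j' = c j j' a a'"
proof -
  have e: "\<And>x y. c j j' x y * (if x = a \<and> y = a' then 1 else 0) = (if x = a then (if y = a' then c j j' x y else 0) else 0)"
    by simp
  have "apply_map I c (\<lambda>x y. if x = a \<and> y = a' then 1 else 0) j j' =
        (\<Sum>x\<in>I. if x = a then (\<Sum>y\<in>I. if y = a' then c j j' x y else 0) else 0)"
    unfolding apply_map_def e by (intro sum.cong) auto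
  also have "\<dots> = c j j' a a'" using assms by simp
  finally show ?thesis .
qed

lemma tens_split:
  assumes "finite S" "i \<in> S"
  shows "(\<Sum>f\<in>tens_idx d S. G f) = (\<Sum>j<d. \<Sum>h\<in>tens_idx d (S - {i}). G (h(i := j)))"
proof -
  have S: "S = insert i (S - {i})" using assms by auto
  have eq: "(\<lambda>p. (snd p)(i := fst p)) = (\<lambda>(y, g). g(i := y))" by (rule ext) (simp add: case_prod_beta)
  have im: "tens_idx d S = (\<lambda>p. (snd p)(i := fst p)) ` ({..<d} \<times> PiE (S - {i}) (\<lambda>_. {..<d}))"
    unfolding tens_idx_def eq by (subst S, subst PiE_insert_eq) simp
  have inj: "inj_on (\<lambda>p. (snd p)(i := fst p)) ({..<d} \<times> PiE (S - {i}) (\<lambda>_. {..<d}))"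
    unfolding eq by (rule inj_combinator) simp
  have "(\<Sum>f\<in>tens_idx d S. G f) = (\<Sum>p\<in>{..<d} \<times> PiE (S - {i}) (\<lambda>_. {..<d}). G ((snd p)(i := fst p)))"
    unfolding im sum.reindex[OF inj] o_def ..
  also have "\<dots> = (\<Sum>j<d. \<Sum>h\<in>tens_idx d (S - {i}). G (h(i := j)))"
    by (simp add: sum.cartesian_product tens_idx_def case_prod_beta)
  finally show ?thesis .
qed

lemma tens_agree:
  assumes "finite S" "i \<in> S" "f \<in> tens_idx d S"
  shows "(\<Sum>f'\<in>tens_idx d S. if \<forall>j\<in>S - {i}. f j = f' j then F f' else 0) = (\<Sum>j'<d. F (f(i := j')))"
proof -
  let ?T' = "tens_idx d (S - {i})"
  define h0 where "h0 = f(i := undefined)"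
  have h0: "h0 \<in> ?T'" using assms(3) unfolding h0_def tens_idx_def by (auto simp: PiE_iff extensional_def)
  have eq: "(\<forall>j\<in>S - {i}. f j = (h(i := j')) j) \<longleftrightarrow> h = h0" if "h \<in> ?T'" for h j'
  proof
    assume a: "\<forall>j\<in>S - {i}. f j = (h(i := j')) j"
    show "h = h0"
    proof (rule PiE_ext[OF that[unfolded tens_idx_def] h0[unfolded tens_idx_def]])
      fix j assume "j \<in> S - {i}"
      thus "h j = h0 j" using a by (auto simp: h0_def)
    qed
  qed (auto simp: h0_def)
  have "(\<Sum>f'\<in>tens_idx d S. if \<forall>j\<in>S - {i}. f j = f' j then F f' else 0)
      = (\<Sum>j'<d. \<Sum>h\<in>?T'. if h = h0 then F (h(i := j')) else 0)"
    unfolding tens_split[OF assms(1,2)] using eq by (intro sum.cong refl) auto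
  also have "\<dots> = (\<Sum>j'<d. F (h0(i := j')))"
  proof (rule sum.cong[OF refl])
    fix j' show "(\<Sum>h\<in>?T'. if h = h0 then F (h(i := j')) else 0) = F (h0(i := j'))"
      using h0 assms(1) by (subst sum.delta) (auto simp: tens_idx_def finite_PiE)
  qed
  also have "\<dots> = (\<Sum>j'<d. F (f(i := j')))" by (simp add: h0_def)
  finally show ?thesis .
qed

lemma prod_indicator:
  "finite A \<Longrightarrow> (\<Prod>j\<in>A. if P j then (1::complex) else 0) = (if \<forall>j\<in>A. P j then 1 else 0)"
  by (induction A rule: finite_induct) auto



definition kb :: "('i \<Rightarrow> complex) \<Rightarrow> 'i \<Rightarrow> 'i \<Rightarrow> complex" where
  "kb u = (\<lambda>a b. u a * cnj (u b))"

lemma ketbra_kb: "ketbra = kb"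
  by (simp add: fun_eq_iff ketbra_def kb_def)

lemma mult_delta_r: "x * (if P then 1 else 0) = (if P then x else (0::complex))" by simp
lemma mult_delta_l: "(if P then 1 else 0) * x = (if P then x else (0::complex))" by simp

lemma sum_swap4:
  "(\<Sum>a\<in>I. \<Sum>a'\<in>I'. \<Sum>f\<in>J. \<Sum>f'\<in>J'. F a a' f f') = (\<Sum>f\<in>J. \<Sum>f'\<in>J'. \<Sum>a\<in>I. \<Sum>a'\<in>I'. F a a' f f')"
proof -
  have "(\<Sum>a\<in>I. \<Sum>a'\<in>I'. \<Sum>f\<in>J. \<Sum>f'\<in>J'. F a a' f f') = (\<Sum>a\<in>I. \<Sum>f\<in>J. \<Sum>a'\<in>I'. \<Sum>f'\<in>J'. F a a' f f')"
    by (rule sum.cong[OF refl], rule sum.swap)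
  also have "\<dots> = (\<Sum>f\<in>J. \<Sum>a\<in>I. \<Sum>a'\<in>I'. \<Sum>f'\<in>J'. F a a' f f')"
    by (rule sum.swap)
  also have "\<dots> = (\<Sum>f\<in>J. \<Sum>a\<in>I. \<Sum>f'\<in>J'. \<Sum>a'\<in>I'. F a a' f f')"
    by (rule sum.cong[OF refl], rule sum.cong[OF refl], rule sum.swap)
  also have "\<dots> = (\<Sum>f\<in>J. \<Sum>f'\<in>J'. \<Sum>a\<in>I. \<Sum>a'\<in>I'. F a a' f f')"
    by (rule sum.cong[OF refl], rule sum.swap)
  finally show ?thesis .
qed

lemma adj_qf:
  shows "(\<Sum>a\<in>I. \<Sum>a'\<in>I. cnj (X a a') * hs_adjoint J c (kb u) a a') = cnj (qf J (apply_map I c X) u)"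
proof -
  have "(\<Sum>a\<in>I. \<Sum>a'\<in>I. cnj (X a a') * hs_adjoint J c (kb u) a a')
     = (\<Sum>a\<in>I. \<Sum>a'\<in>I. \<Sum>f\<in>J. \<Sum>f'\<in>J. cnj (X a a') * cnj (c f f' a a') * u f * cnj (u f'))"
    unfolding hs_adjoint_def kb_def sum_distrib_left by (intro sum.cong refl) (simp add: mult_ac)
  also have "\<dots> = (\<Sum>f\<in>J. \<Sum>f'\<in>J. \<Sum>a\<in>I. \<Sum>a'\<in>I. cnj (X a a') * cnj (c f f' a a') * u f * cnj (u f'))"
    by (rule sum_swap4)
  also have "\<dots> = cnj (qf J (apply_map I c X) u)"
    unfolding qf_def apply_map_def cnj_sum complex_cnj_mult complex_cnj_cnj sum_distrib_left sum_distrib_right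
    by (intro sum.cong refl) (simp add: mult_ac)
  finally show ?thesis .
qed

lemma psd_ofreal: "(\<And>v. \<exists>r\<ge>0. qf I A v = of_real r) \<Longrightarrow> psd_on I A"
  unfolding psd_on_qf by (metis Im_complex_of_real Re_complex_of_real)

lemma qf_delta: "finite I \<Longrightarrow> a \<in> I \<Longrightarrow> qf I A (\<lambda>x. if x = a then 1 else 0) = A a a"
proof -
  assume fi: "finite I" "a \<in> I"
  have e: "\<And>x y. cnj (if x = a then 1 else 0) * A x y * (if y = a then 1 else 0) = (if x = a then (if y = a then A x y else 0) else 0)"
    by simp
  have "qf I A (\<lambda>x. if x = a then 1 else 0) = (\<Sum>x\<in>I. \<Sum>y\<in>I. if x = a then (if y = a then A x y else 0) else 0)"
    unfolding qf_def e ..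
  also have "\<dots> = (\<Sum>x\<in>I. if x = a then (\<Sum>y\<in>I. if y = a then A x y else 0) else 0)"
    by (intro sum.cong) auto
  also have "\<dots> = A a a" using fi by simp
  finally show ?thesis .
qed

lemma psd_trace:
  assumes "finite I" "psd_on I A"
  shows "Im (mtrace I A) = 0" "0 \<le> Re (mtrace I A)"
proof -
  have eq: "mtrace I A = (\<Sum>a\<in>I. qf I A (\<lambda>x. if x = a then 1 else 0))"
    unfolding mtrace_def using assms(1) by (intro sum.cong) (auto simp: qf_delta)
  show "Im (mtrace I A) = 0" unfolding eq Im_sum using assms(2) by (simp add: psd_on_qf)
  show "0 \<le> Re (mtrace I A)" unfolding eq Re_sum using assms(2) by (auto simp: psd_on_qf intro: sum_nonneg)
qed

lemma kb_psd: "finite I \<Longrightarrow> psd_on I (kb v)"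
proof (rule psd_ofreal)
  fix u
  define z where "z = (\<Sum>x\<in>I. cnj (u x) * v x)"
  have "qf I (kb v) u = z * cnj z"
    by (simp add: qf_def kb_def z_def sum_distrib_left sum_distrib_right mult_ac)
  also have "\<dots> = of_real ((cmod z)^2)" using complex_norm_square[of z] by simp
  finally show "\<exists>r\<ge>0. qf I (kb v) u = of_real r" by (intro exI[of _ "(cmod z)^2"]) simp
qed

lemma delta2:
  assumes "finite I" "a \<in> I" "b \<in> I"
  shows "(\<Sum>z\<in>I. \<Sum>z'\<in>I. if z = a then (if z' = b then F z z' else 0) else (0::complex)) = F a b"
proof -
  have "(\<Sum>z\<in>I. \<Sum>z'\<in>I. if z = a then (if z' = b then F z z' else 0) else (0::complex))
      = (\<Sum>z\<in>I. if z = a then (\<Sum>z'\<in>I. if z' = b then F z z' else 0) else 0)"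
    by (intro sum.cong refl) auto
  also have "\<dots> = F a b" using assms by simp
  finally show ?thesis .
qed

lemma qf_two:
  assumes "finite I" "a \<in> I" "b \<in> I" "a \<noteq> b"
  shows "qf I A (\<lambda>z. if z = a then x else if z = b then y else 0)
    = cnj x * A a a * x + cnj x * A a b * y + cnj y * A b a * x + cnj y * A b b * y"
proof -
  let ?v = "\<lambda>z. if z = a then x else if z = b then y else 0"
  have v: "?v z = (if z = a then x else 0) + (if z = b then y else 0)" for z using assms(4) by auto
  have "qf I A ?v = (\<Sum>z\<in>I. \<Sum>z'\<in>I.
      (if z = a then (if z' = a then cnj x * A z z' * x else 0) else 0)
    + (if z = a then (if z' = b then cnj x * A z z' * y else 0) else 0)
    + (if z = b then (if z' = a then cnj y * A z z' * x else 0) else 0)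
    + (if z = b then (if z' = b then cnj y * A z z' * y else 0) else 0))"
    unfolding qf_def v by (intro sum.cong refl) (simp add: algebra_simps)
  also have "\<dots> = cnj x * A a a * x + cnj x * A a b * y + cnj y * A b a * x + cnj y * A b b * y"
    unfolding sum.distrib using assms by (simp only: delta2)
  finally show ?thesis .
qed

lemma psd_diag: "finite I \<Longrightarrow> psd_on I A \<Longrightarrow> a \<in> I \<Longrightarrow> Im (A a a) = 0 \<and> 0 \<le> Re (A a a)"
  using qf_delta[of I a A] by (simp add: psd_on_qf) (metis)

lemma psd_herm:
  assumes "finite I" "psd_on I A" "a \<in> I" "b \<in> I"
  shows "A a b = cnj (A b a)"
proof (cases "a = b")
  case True thus ?thesis using psd_diag[OF assms(1,2,3)] by (simp add: complex_eq_iff)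
next
  case False
  have da: "Im (A a a) = 0" and db: "Im (A b b) = 0" using psd_diag[OF assms(1,2,3)] psd_diag[OF assms(1,2,4)] by auto
  have "Im (qf I A (\<lambda>z. if z = a then 1 else if z = b then 1 else 0)) = 0" using assms(2) by (simp add: psd_on_qf)
  hence 1: "Im (A a b) + Im (A b a) = 0" using qf_two[OF assms(1,3,4) False, of A 1 1] da db by simp
  have "Im (qf I A (\<lambda>z. if z = a then 1 else if z = b then \<i> else 0)) = 0" using assms(2) by (simp add: psd_on_qf)
  hence 2: "Re (A a b) - Re (A b a) = 0" using qf_two[OF assms(1,3,4) False, of A 1 \<i>] da db by simp
  show ?thesis using 1 2 by (simp add: complex_eq_iff)
qed

lemma psd_minor:
  assumes "finite I" "psd_on I A" "a \<in> I" "b \<in> I"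
  shows "(cmod (A a b))^2 \<le> Re (A a a) * Re (A b b)"
proof (cases "a = b")
  case True
  have "Im (A a a) = 0" using psd_diag[OF assms(1,2,3)] by auto
  hence "A a a = of_real (Re (A a a))" by (simp add: complex_eq_iff)
  hence "cmod (A a a) = \<bar>Re (A a a)\<bar>" by (metis norm_of_real)
  thus ?thesis using True by (simp add: power2_eq_square)
next
  case False
  define \<alpha> where "\<alpha> = Re (A a a)"
  define \<beta> where "\<beta> = Re (A b b)"
  define c where "c = A a b"
  define m where "m = (cmod c)^2"
  have Aaa: "A a a = of_real \<alpha>" and Abb: "A b b = of_real \<beta>"
    using psd_diag[OF assms(1,2,3)] psd_diag[OF assms(1,2,4)] by (auto simp: complex_eq_iff \<alpha>_def \<beta>_def)
  have al: "\<alpha> \<ge> 0" and be: "\<beta> \<ge> 0" using psd_diag[OF assms(1,2,3)] psd_diag[OF assms(1,2,4)] by (auto simp: \<alpha>_def \<beta>_def)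
  have Aba: "A b a = cnj c" using psd_herm[OF assms(1,2,4,3)] by (simp add: c_def)
  have ccnj: "c * cnj c = of_real m" using complex_norm_square[of c] by (simp add: m_def)
  have key: "0 \<le> \<alpha> * \<tau>^2 - 2 * \<tau> * m + \<beta> * m" for \<tau> :: real
  proof -
    have "qf I A (\<lambda>z. if z = a then of_real \<tau> else if z = b then - cnj c else 0)
      = of_real (\<alpha> * \<tau>^2 - 2 * \<tau> * m + \<beta> * m)"
    proof -
      have "qf I A (\<lambda>z. if z = a then of_real \<tau> else if z = b then - cnj c else 0)
        = of_real \<alpha> * (of_real \<tau>)^2 - 2 * of_real \<tau> * (c * cnj c) + of_real \<beta> * (c * cnj c)"
        unfolding qf_two[OF assms(1,3,4) False] Aaa Abb Aba c_def[symmetric]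
        by (simp add: algebra_simps power2_eq_square)
      thus ?thesis unfolding ccnj by simp
    qed
    moreover have "0 \<le> Re (qf I A (\<lambda>z. if z = a then of_real \<tau> else if z = b then - cnj c else 0))"
      using assms(2) by (simp add: psd_on_qf)
    ultimately show ?thesis by simp
  qed
  have m0: "m \<ge> 0" by (simp add: m_def)
  have "m \<le> \<alpha> * \<beta>"
  proof (cases "\<beta> > 0")
    case True
    have "0 \<le> \<beta> * (\<alpha> * \<beta> - m)" using key[of \<beta>] by (simp add: algebra_simps power2_eq_square)
    thus ?thesis using True by (simp add: zero_le_mult_iff)
  next
    case False
    hence b0: "\<beta> = 0" using be by simp
    show ?thesis
    proof (cases "\<alpha> > 0")
      case True
      have "0 \<le> \<alpha> * (m / \<alpha>)^2 - 2 * (m / \<alpha>) * m" using key[of "m / \<alpha>"] b0 by simp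
      also have "\<dots> = - (m^2 / \<alpha>)" using True by (simp add: field_simps power2_eq_square)
      finally have "m^2 \<le> 0" using True by (simp add: divide_le_0_iff)
      hence "m = 0" by simp
      thus ?thesis using b0 by simp
    next
      case False
      hence "\<alpha> = 0" using al by simp
      thus ?thesis using key[of 1] b0 m0 by simp
    qed
  qed
  thus ?thesis by (simp add: m_def c_def \<alpha>_def \<beta>_def)
qed

lemma cs_frac:
  fixes r :: "'a \<Rightarrow> real" and y :: "'a \<Rightarrow> complex"
  assumes "finite L" "\<And>l. l \<in> L \<Longrightarrow> r l \<ge> 0" "\<And>l. l \<in> L \<Longrightarrow> r l = 0 \<Longrightarrow> y l = 0"
  shows "(cmod (\<Sum>l\<in>L. y l))^2 \<le> (\<Sum>l\<in>L. r l) * (\<Sum>l\<in>L. (cmod (y l))^2 / r l)"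
proof -
  have "cmod (\<Sum>l\<in>L. y l) \<le> (\<Sum>l\<in>L. cmod (y l))" by (rule norm_sum)
  also have "\<dots> = (\<Sum>l\<in>L. sqrt (r l) * (cmod (y l) / sqrt (r l)))"
  proof (rule sum.cong[OF refl])
    fix l assume l: "l \<in> L"
    show "cmod (y l) = sqrt (r l) * (cmod (y l) / sqrt (r l))"
      using assms(2,3)[OF l] by (cases "r l = 0") auto
  qed
  finally have n: "cmod (\<Sum>l\<in>L. y l) \<le> (\<Sum>l\<in>L. sqrt (r l) * (cmod (y l) / sqrt (r l)))" .
  have "(cmod (\<Sum>l\<in>L. y l))^2 \<le> (\<Sum>l\<in>L. sqrt (r l) * (cmod (y l) / sqrt (r l)))^2"
    using n by (intro power_mono) auto
  also have "\<dots> \<le> (\<Sum>l\<in>L. (sqrt (r l))^2) * (\<Sum>l\<in>L. (cmod (y l) / sqrt (r l))^2)"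
    by (rule Cauchy_Schwarz_ineq_sum)
  also have "\<dots> = (\<Sum>l\<in>L. r l) * (\<Sum>l\<in>L. (cmod (y l))^2 / r l)"
    using assms(2) by (simp add: power_divide)
  finally show ?thesis .
qed

definition yv :: "('p \<times> 'p) set \<Rightarrow> ('p \<times> 'p \<Rightarrow> complex) \<Rightarrow> ('p \<Rightarrow> 'p \<Rightarrow> complex) \<Rightarrow> complex" where
  "yv P v X = (\<Sum>p\<in>P. cnj (v p) * X (fst p) (snd p))"

lemma qf_vo1: "(\<Sum>p\<in>P. \<Sum>q\<in>P. cnj (v p) * vec_outer X p q * v q) = yv P v X * cnj (yv P v X)"
  by (simp add: vec_outer_def yv_def case_prod_beta sum_distrib_left sum_distrib_right mult_ac)

lemma qf_vo:
  assumes "finite P" "finite L"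
  shows "qf P (\<lambda>p q. \<Sum>l\<in>L. vec_outer (X l) p q / of_real (c l)) v
       = of_real (\<Sum>l\<in>L. (cmod (yv P v (X l)))^2 / c l)"
proof -
  have "qf P (\<lambda>p q. \<Sum>l\<in>L. vec_outer (X l) p q / of_real (c l)) v
      = (\<Sum>p\<in>P. \<Sum>q\<in>P. \<Sum>l\<in>L. cnj (v p) * vec_outer (X l) p q * v q / of_real (c l))"
    unfolding qf_def sum_distrib_left sum_distrib_right by (intro sum.cong refl) simp
  also have "\<dots> = (\<Sum>l\<in>L. \<Sum>p\<in>P. \<Sum>q\<in>P. cnj (v p) * vec_outer (X l) p q * v q / of_real (c l))"
    by (subst sum.swap, subst (2) sum.swap, rule refl)
  also have "\<dots> = (\<Sum>l\<in>L. (yv P v (X l) * cnj (yv P v (X l))) / of_real (c l))"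
    by (intro sum.cong refl) (simp add: qf_vo1[symmetric] sum_divide_distrib)
  also have "\<dots> = of_real (\<Sum>l\<in>L. (cmod (yv P v (X l)))^2 / c l)"
    by (simp add: complex_norm_square[symmetric])
  finally show ?thesis .
qed

lemma qf_diff: "qf I (\<lambda>p q. A p q - B p q) v = qf I A v - qf I B v"
  by (simp add: qf_def algebra_simps sum_subtractf)



locale jsetup =
  fixes d :: nat and S :: "nat set" and e :: "nat \<Rightarrow> nat \<Rightarrow> nat \<Rightarrow> complex"
    and Lam :: "(nat \<Rightarrow> nat, nat) lmap" and Phi :: "nat \<Rightarrow> (nat, nat) lmap"
  assumes fin: "finite S" and onbs: "\<And>i. i \<in> S \<Longrightarrow> onb d (e i)"
    and chan: "channel {..<d} (tens_idx d S) Lam"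
    and marg: "\<And>i X a b. i \<in> S \<Longrightarrow> a < d \<Longrightarrow> b < d \<Longrightarrow>
       marginal d S i (apply_map {..<d} Lam X) a b = apply_map {..<d} (Phi i) X a b"
begin

definition w :: "(nat \<Rightarrow> nat) \<Rightarrow> (nat \<Rightarrow> nat) \<Rightarrow> complex" where
  "w l f = (\<Prod>j\<in>S. e j (l j) (f j))"

lemma finT: "finite (tens_idx d S)"
  using fin by (simp add: tens_idx_def finite_PiE)

lemma T_mem: "f \<in> tens_idx d S \<Longrightarrow> j \<in> S \<Longrightarrow> f j < d"
  by (auto simp: tens_idx_def PiE_iff)

lemma complete:
  assumes f: "f \<in> tens_idx d S" and f': "f' \<in> tens_idx d S"
  shows "(\<Sum>l\<in>tens_idx d S. w l f * cnj (w l f')) = (if f = f' then 1 else 0)"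
proof -
  have "(\<Sum>l\<in>tens_idx d S. w l f * cnj (w l f'))
      = (\<Sum>l\<in>tens_idx d S. \<Prod>j\<in>S. e j (l j) (f j) * cnj (e j (l j) (f' j)))"
    by (simp add: w_def prod.distrib)
  also have "\<dots> = (\<Prod>j\<in>S. \<Sum>k<d. e j k (f j) * cnj (e j k (f' j)))"
    by (simp add: prod_sum_PiE fin tens_idx_def)
  also have "\<dots> = (\<Prod>j\<in>S. if f j = f' j then 1 else 0)"
    by (rule prod.cong[OF refl]) (simp add: onb_complete onbs T_mem f f')
  also have "\<dots> = (if f = f' then 1 else 0)"
  proof -
    have "(\<forall>j\<in>S. f j = f' j) \<longleftrightarrow> f = f'"
      using PiE_ext[OF f[unfolded tens_idx_def] f'[unfolded tens_idx_def]] by auto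
    thus ?thesis by (simp add: prod_indicator fin)
  qed
  finally show ?thesis .
qed

lemma complete_k:
  assumes i: "i \<in> S" and k: "k < d" and f: "f \<in> tens_idx d S" and f': "f' \<in> tens_idx d S"
  shows "(\<Sum>l\<in>tens_idx d S. if l i = k then w l f * cnj (w l f') else 0)
       = e i k (f i) * cnj (e i k (f' i)) * (if \<forall>j\<in>S - {i}. f j = f' j then 1 else 0)"
proof -
  define g where "g j y = (if j = i then (if y = k then 1 else 0) else 1) * (e j y (f j) * cnj (e j y (f' j)))" for j y
  have "(\<Sum>l\<in>tens_idx d S. if l i = k then w l f * cnj (w l f') else 0)
      = (\<Sum>l\<in>tens_idx d S. \<Prod>j\<in>S. g j (l j))"
  proof (rule sum.cong[OF refl])
    fix l
    have "(\<Prod>j\<in>S. g j (l j)) = (\<Prod>j\<in>S. if j = i then (if l j = k then 1 else 0) else 1) *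
        (\<Prod>j\<in>S. e j (l j) (f j) * cnj (e j (l j) (f' j)))"
      unfolding g_def prod.distrib by (rule refl)
    also have "\<dots> = (if l i = k then 1 else 0) * (w l f * cnj (w l f'))"
      using i by (simp add: prod.delta fin w_def prod.distrib)
    finally show "(if l i = k then w l f * cnj (w l f') else 0) = (\<Prod>j\<in>S. g j (l j))" by simp
  qed
  also have "\<dots> = (\<Prod>j\<in>S. \<Sum>y<d. g j y)"
    by (simp add: prod_sum_PiE fin tens_idx_def)
  also have "\<dots> = (\<Sum>y<d. g i y) * (\<Prod>j\<in>S - {i}. \<Sum>y<d. g j y)"
    using i fin by (simp add: prod.remove)
  also have "(\<Sum>y<d. g i y) = e i k (f i) * cnj (e i k (f' i))"
  proof -
    have "\<And>y. g i y = (if y = k then e i y (f i) * cnj (e i y (f' i)) else 0)" by (simp add: g_def)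
    thus ?thesis using k by (simp add: sum.delta)
  qed
  also have "(\<Prod>j\<in>S - {i}. \<Sum>y<d. g j y) = (\<Prod>j\<in>S - {i}. if f j = f' j then 1 else 0)"
    by (rule prod.cong[OF refl]) (simp add: g_def onb_complete onbs T_mem f f')
  also have "\<dots> = (if \<forall>j\<in>S - {i}. f j = f' j then 1 else 0)"
    by (simp add: prod_indicator fin)
  finally show ?thesis .
qed

definition M :: "(nat \<Rightarrow> nat) \<Rightarrow> nat \<Rightarrow> nat \<Rightarrow> complex" where
  "M l = hs_adjoint (tens_idx d S) Lam (kb (w l))"

definition t :: "(nat \<Rightarrow> nat) \<Rightarrow> complex" where
  "t l = mtrace {..<d} (M l)"

lemma Lam_pos: "psd_on {..<d} Y \<Longrightarrow> psd_on (tens_idx d S) (apply_map {..<d} Lam Y)"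
  using cp_pos chan unfolding channel_def by blast

lemma M_psd: "psd_on {..<d} (M l)"
  unfolding psd_on_qf
proof
  fix v
  have "qf {..<d} (M l) v = (\<Sum>a<d. \<Sum>a'<d. cnj (kb v a a') * M l a a')"
    unfolding qf_def kb_def by (intro sum.cong refl) (simp add: mult_ac)
  also have "\<dots> = cnj (qf (tens_idx d S) (apply_map {..<d} Lam (kb v)) (w l))"
    unfolding M_def by (rule adj_qf)
  finally show "Im (qf {..<d} (M l) v) = 0 \<and> 0 \<le> Re (qf {..<d} (M l) v)"
    using Lam_pos[OF kb_psd[of "{..<d}" v]] by (simp add: psd_on_qf)
qed

lemma t_Im: "Im (t l) = 0" and t_Re: "0 \<le> Re (t l)"
  using psd_trace[OF _ M_psd] by (auto simp: t_def)

lemma t_eq: "t l = of_real (Re (t l))"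
  by (simp add: complex_eqI t_Im)

lemma sumM:
  assumes "a < d" "a' < d"
  shows "(\<Sum>l\<in>tens_idx d S. M l a a') = (if a = a' then 1 else 0)"
proof -
  let ?T = "tens_idx d S"
  have "(\<Sum>l\<in>?T. M l a a') = (\<Sum>l\<in>?T. \<Sum>f\<in>?T. \<Sum>f'\<in>?T. cnj (Lam f f' a a') * (w l f * cnj (w l f')))"
    unfolding M_def hs_adjoint_def kb_def ..
  also have "\<dots> = (\<Sum>f\<in>?T. \<Sum>f'\<in>?T. \<Sum>l\<in>?T. cnj (Lam f f' a a') * (w l f * cnj (w l f')))"
    by (subst sum.swap, rule sum.cong[OF refl], rule sum.swap)
  also have "\<dots> = (\<Sum>f\<in>?T. \<Sum>f'\<in>?T. cnj (Lam f f' a a') * (if f = f' then 1 else 0))"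
    by (intro sum.cong refl) (simp add: sum_distrib_left[symmetric] complete)
  also have "\<dots> = (\<Sum>f\<in>?T. cnj (Lam f f a a'))"
    by (intro sum.cong refl) (simp add: mult_delta_r sum.delta finT)
  also have "\<dots> = cnj (mtrace ?T (apply_map {..<d} Lam (\<lambda>x y. if x = a \<and> y = a' then 1 else 0)))"
    using assms by (simp add: mtrace_def apply_E)
  also have "\<dots> = cnj (mtrace {..<d} (\<lambda>x y. if x = a \<and> y = a' then 1 else 0))"
    using chan unfolding channel_def trace_preserving_def by simp
  also have "\<dots> = (if a = a' then 1 else 0)"
  proof (cases "a = a'")
    case False
    hence ff: "\<And>x. (x = a \<and> x = a') = False" by auto
    show ?thesis unfolding mtrace_def ff using False by simp
  qed (use assms in \<open>simp add: mtrace_def if_distrib[of cnj]\<close>)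
  finally show ?thesis .
qed

lemma hs_nonneg: "Im (\<Sum>a<d. \<Sum>a'<d. cnj (M l a a') * M m a a') = 0 \<and> 0 \<le> Re (\<Sum>a<d. \<Sum>a'<d. cnj (M l a a') * M m a a')"
proof -
  have "(\<Sum>a<d. \<Sum>a'<d. cnj (M l a a') * M m a a') = cnj (qf (tens_idx d S) (apply_map {..<d} Lam (M l)) (w m))"
    unfolding M_def[of m] by (rule adj_qf)
  thus ?thesis using Lam_pos[OF M_psd[of l]] by (simp add: psd_on_qf)
qed

lemma M_sq:
  assumes l: "l \<in> tens_idx d S"
  shows "(\<Sum>a<d. \<Sum>a'<d. (cmod (M l a a'))^2) \<le> Re (t l)"
proof -
  let ?T = "tens_idx d S"
  let ?h = "\<lambda>m. \<Sum>a<d. \<Sum>a'<d. cnj (M l a a') * M m a a'"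
  have "(\<Sum>m\<in>?T. ?h m) = (\<Sum>a<d. \<Sum>a'<d. \<Sum>m\<in>?T. cnj (M l a a') * M m a a')"
    by (subst sum.swap, rule sum.cong[OF refl], rule sum.swap)
  also have "\<dots> = (\<Sum>a<d. \<Sum>a'<d. cnj (M l a a') * (if a = a' then 1 else 0))"
    by (intro sum.cong refl) (simp add: sum_distrib_left[symmetric] sumM)
  also have "\<dots> = cnj (t l)"
    by (simp add: mult_delta_r sum.delta t_def mtrace_def)
  finally have sh: "(\<Sum>m\<in>?T. ?h m) = cnj (t l)" .
  have "Re (?h l) = (\<Sum>a<d. \<Sum>a'<d. (cmod (M l a a'))^2)"
  proof -
    have "\<And>z. cnj z * z = of_real ((cmod z)^2)" using complex_norm_square by (simp add: mult.commute)
    thus ?thesis by (simp add: Re_sum)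
  qed
  moreover have "Re (?h l) \<le> (\<Sum>m\<in>?T. Re (?h m))"
    using l finT hs_nonneg by (intro member_le_sum) auto
  moreover have "(\<Sum>m\<in>?T. Re (?h m)) = Re (t l)"
  proof -
    have "Re (\<Sum>m\<in>?T. ?h m) = Re (t l)" using sh by simp
    thus ?thesis by (simp add: Re_sum)
  qed
  ultimately show ?thesis by linarith
qed

lemma M_sq2: "(\<Sum>a<d. \<Sum>a'<d. (cmod (M l a a'))^2) \<le> (Re (t l))^2"
proof -
  have "(\<Sum>a<d. \<Sum>a'<d. (cmod (M l a a'))^2) \<le> (\<Sum>a<d. \<Sum>a'<d. Re (M l a a) * Re (M l a' a'))"
    by (intro sum_mono psd_minor[OF _ M_psd]) auto
  also have "\<dots> = (\<Sum>a<d. Re (M l a a))^2"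
    by (simp add: power2_eq_square sum_product)
  also have "(\<Sum>a<d. Re (M l a a)) = Re (t l)" by (simp add: t_def mtrace_def Re_sum)
  finally show ?thesis .
qed

lemma M_zero: "t l = 0 \<Longrightarrow> a < d \<Longrightarrow> a' < d \<Longrightarrow> M l a a' = 0"
proof -
  assume t0: "t l = 0" and a: "a < d" "a' < d"
  have "(cmod (M l a a'))^2 \<le> (\<Sum>a'<d. (cmod (M l a a'))^2)"
    using a by (intro member_le_sum) auto
  also have "\<dots> \<le> (\<Sum>a<d. \<Sum>a'<d. (cmod (M l a a'))^2)"
    using a by (intro member_le_sum[where f = "\<lambda>a. \<Sum>a'<d. (cmod (M l a a'))^2"] sum_nonneg) auto
  also have "\<dots> \<le> 0" using M_sq2[of l] t0 by simp
  finally show ?thesis by simp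
qed

lemma A_eq:
  assumes i: "i \<in> S" and k: "k < d" and a: "a < d" and a': "a' < d"
  shows "hs_adjoint {..<d} (Phi i) (ketbra (e i k)) a a' = (\<Sum>l\<in>tens_idx d S. if l i = k then M l a a' else 0)"
proof -
  let ?T = "tens_idx d S"
  let ?T' = "tens_idx d (S - {i})"
  let ?E = "\<lambda>x y. if x = a \<and> y = a' then 1 else (0::complex)"
  have Phi_eq: "Phi i j j' a a' = (\<Sum>h\<in>?T'. Lam (h(i:=j)) (h(i:=j')) a a')" if "j < d" "j' < d" for j j'
  proof -
    have "Phi i j j' a a' = apply_map {..<d} (Phi i) ?E j j'" using a a' by (simp add: apply_E)
    also have "\<dots> = marginal d S i (apply_map {..<d} Lam ?E) j j'" using marg[OF i that] by simp
    also have "\<dots> = (\<Sum>h\<in>?T'. Lam (h(i:=j)) (h(i:=j')) a a')" using a a' by (simp add: marginal_def apply_E)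
    finally show ?thesis .
  qed
  have "hs_adjoint {..<d} (Phi i) (ketbra (e i k)) a a'
      = (\<Sum>j<d. \<Sum>j'<d. cnj (Phi i j j' a a') * (e i k j * cnj (e i k j')))"
    by (simp add: hs_adjoint_def ketbra_def)
  also have "\<dots> = (\<Sum>j<d. \<Sum>j'<d. \<Sum>h\<in>?T'. cnj (Lam (h(i:=j)) (h(i:=j')) a a') * (e i k j * cnj (e i k j')))"
    by (intro sum.cong refl) (simp add: Phi_eq sum_distrib_right)
  also have "\<dots> = (\<Sum>j<d. \<Sum>h\<in>?T'. \<Sum>j'<d. cnj (Lam (h(i:=j)) (h(i:=j')) a a') * (e i k j * cnj (e i k j')))"
    by (rule sum.cong[OF refl], rule sum.swap)
  also have "\<dots> = (\<Sum>f\<in>?T. \<Sum>j'<d. cnj (Lam f (f(i:=j')) a a') * (e i k (f i) * cnj (e i k j')))"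
    unfolding tens_split[OF fin i] by simp
  also have "\<dots> = (\<Sum>f\<in>?T. \<Sum>f'\<in>?T. if \<forall>j\<in>S - {i}. f j = f' j then cnj (Lam f f' a a') * (e i k (f i) * cnj (e i k (f' i))) else 0)"
    by (rule sum.cong[OF refl], subst tens_agree[OF fin i], simp_all)
  also have "\<dots> = (\<Sum>f\<in>?T. \<Sum>f'\<in>?T. cnj (Lam f f' a a') * (\<Sum>l\<in>?T. if l i = k then w l f * cnj (w l f') else 0))"
    by (intro sum.cong refl) (simp add: complete_k i k)
  also have "\<dots> = (\<Sum>f\<in>?T. \<Sum>f'\<in>?T. \<Sum>l\<in>?T. if l i = k then cnj (Lam f f' a a') * (w l f * cnj (w l f')) else 0)"
    by (intro sum.cong refl) (simp add: sum_distrib_left if_distrib[of "\<lambda>x. _ * x"] cong: if_cong)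
  also have "\<dots> = (\<Sum>l\<in>?T. \<Sum>f\<in>?T. \<Sum>f'\<in>?T. if l i = k then cnj (Lam f f' a a') * (w l f * cnj (w l f')) else 0)"
    by (subst (2) sum.swap, subst sum.swap, rule refl)
  also have "\<dots> = (\<Sum>l\<in>?T. if l i = k then M l a a' else 0)"
    unfolding M_def hs_adjoint_def kb_def by (intro sum.cong refl) auto
  finally show ?thesis .
qed

lemma sum_prod_fs: "(\<Sum>p\<in>A \<times> B. f (fst p) (snd p)) = (\<Sum>a\<in>A. \<Sum>b\<in>B. (f a b :: complex))"
  by (subst sum.cartesian_product) (simp add: case_prod_beta)

lemma t_cnj: "cnj (t l) = t l"
  using t_Im[of l] by (simp add: complex_eq_iff)

lemma sum_t: "(\<Sum>l\<in>tens_idx d S. Re (t l)) = real d"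
proof -
  have "(\<Sum>l\<in>tens_idx d S. t l) = (\<Sum>a<d. \<Sum>l\<in>tens_idx d S. M l a a)"
    unfolding t_def mtrace_def by (rule sum.swap)
  also have "\<dots> = of_nat d" by (simp add: sumM)
  finally show ?thesis by (metis Re_sum Re_complex_of_real of_real_of_nat_eq)
qed

lemma main:
  assumes Sne: "S \<noteq> {}"
  shows "sdp_val d Phi S e \<le> real d"
proof -
  let ?T = "tens_idx d S"
  let ?P = "{..<d} \<times> {..<d}"
  define r where "r l = Re (t l)" for l
  define L where "L = {l \<in> ?T. t l \<noteq> 0}"
  define H where "H = (\<lambda>p q. \<Sum>l\<in>L. vec_outer (M l) p q / t l)"
  have finP: "finite ?P" by simp
  have finL: "finite L" using finT by (simp add: L_def)
  have tr: "t l = of_real (r l)" for l using t_eq by (simp add: r_def)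
  have r0: "r l \<ge> 0" for l using t_Re by (simp add: r_def)
  have H': "H = (\<lambda>p q. \<Sum>l\<in>L. vec_outer (M l) p q / of_real (r l))"
    unfolding H_def using tr by simp
  have herm: "hermitian_on ?P H"
    unfolding hermitian_on_def H'
    by (auto simp: vec_outer_def case_prod_beta mult.commute)
  have trH: "Re (mtrace ?P H) \<le> real d"
  proof -
    have vo: "vec_outer X p p = of_real ((cmod (X (fst p) (snd p)))^2)" for X p
      using complex_norm_square[of "X (fst p) (snd p)"] by (simp add: vec_outer_def case_prod_beta)
    have "mtrace ?P H = (\<Sum>p\<in>?P. \<Sum>l\<in>L. of_real ((cmod (M l (fst p) (snd p)))^2 / r l))"
      unfolding mtrace_def H' vo by simp
    also have "\<dots> = of_real (\<Sum>l\<in>L. (\<Sum>a<d. \<Sum>a'<d. (cmod (M l a a'))^2) / r l)"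
    proof -
      have "(\<Sum>p\<in>?P. \<Sum>l\<in>L. of_real ((cmod (M l (fst p) (snd p)))^2 / r l))
          = (\<Sum>l\<in>L. \<Sum>p\<in>?P. of_real ((cmod (M l (fst p) (snd p)))^2 / r l) :: complex)"
        by (rule sum.swap)
      also have "\<dots> = (\<Sum>l\<in>L. \<Sum>a<d. \<Sum>a'<d. of_real ((cmod (M l a a'))^2 / r l))"
        by (rule sum.cong[OF refl], rule sum_prod_fs)
      also have "\<dots> = of_real (\<Sum>l\<in>L. (\<Sum>a<d. \<Sum>a'<d. (cmod (M l a a'))^2) / r l)"
        by (simp add: sum_divide_distrib)
      finally show ?thesis .
    qed
    finally have "Re (mtrace ?P H) = (\<Sum>l\<in>L. (\<Sum>a<d. \<Sum>a'<d. (cmod (M l a a'))^2) / r l)" by simp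
    also have "\<dots> \<le> (\<Sum>l\<in>L. r l)"
    proof (rule sum_mono)
      fix l assume "l \<in> L"
      hence "r l \<noteq> 0" using tr by (auto simp: L_def)
      hence rp: "r l > 0" using r0[of l] by simp
      have "(\<Sum>a<d. \<Sum>a'<d. (cmod (M l a a'))^2) \<le> r l * r l"
        using M_sq2[of l] by (simp add: r_def power2_eq_square)
      thus "(\<Sum>a<d. \<Sum>a'<d. (cmod (M l a a'))^2) / r l \<le> r l"
        using rp by (simp add: divide_le_eq)
    qed
    also have "\<dots> \<le> (\<Sum>l\<in>?T. r l)"
      using finT r0 by (intro sum_mono2) (auto simp: L_def)
    also have "\<dots> = real d" using sum_t by (simp add: r_def)
    finally show ?thesis .
  qed
  have y0: "yv ?P v (M l) = 0" if "r l = 0" for l v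
  proof -
    have "t l = 0" using that tr[of l] by simp
    hence "\<And>p. p \<in> ?P \<Longrightarrow> M l (fst p) (snd p) = 0" using M_zero by auto
    thus ?thesis unfolding yv_def by simp
  qed
  have H'': "H = (\<lambda>p q. \<Sum>l\<in>?T. vec_outer (M l) p q / of_real (r l))"
  proof (intro ext)
    fix p q
    have "L = {l \<in> ?T. r l \<noteq> 0}" unfolding L_def using tr by force
    hence "H p q = (\<Sum>l\<in>?T. if r l \<noteq> 0 then vec_outer (M l) p q / of_real (r l) else 0)"
      unfolding H' using finT by (simp add: sum.inter_filter)
    also have "\<dots> = (\<Sum>l\<in>?T. vec_outer (M l) p q / of_real (r l))"
      by (intro sum.cong refl) auto
    finally show "H p q = (\<Sum>l\<in>?T. vec_outer (M l) p q / of_real (r l))" .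
  qed
  have psdG: "psd_on ?P (\<lambda>p q. H p q - G_mat d (Phi i) (e i) p q)" if i: "i \<in> S" for i
  proof -
    define A where "A k = hs_adjoint {..<d} (Phi i) (ketbra (e i k))" for k
    define Tk where "Tk k = {l \<in> ?T. l i = k}" for k
    define \<rho> where "\<rho> k = (\<Sum>l\<in>Tk k. r l)" for k
    have Aeq: "A k a a' = (\<Sum>l\<in>Tk k. M l a a')" if "k < d" "a < d" "a' < d" for k a a'
      using A_eq[OF i that] by (simp add: A_def Tk_def sum.inter_filter finT)
    have tau: "mtrace {..<d} (A k) = of_real (\<rho> k)" if "k < d" for k
    proof -
      have "mtrace {..<d} (A k) = (\<Sum>a<d. \<Sum>l\<in>Tk k. M l a a)"
        unfolding mtrace_def using that by (intro sum.cong refl) (simp add: Aeq)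
      also have "\<dots> = (\<Sum>l\<in>Tk k. t l)" unfolding t_def mtrace_def by (rule sum.swap)
      also have "\<dots> = of_real (\<rho> k)" unfolding \<rho>_def using tr by simp
      finally show ?thesis .
    qed
    have G': "G_mat d (Phi i) (e i) = (\<lambda>p q. \<Sum>k<d. vec_outer (A k) p q / of_real (\<rho> k))"
    proof (intro ext)
      fix p q
      have eqK: "{k. k < d \<and> mtrace {..<d} (A k) \<noteq> 0}
          = {k \<in> {..<d}. mtrace {..<d} (A k) \<noteq> 0}" by auto
      have "G_mat d (Phi i) (e i) p q = (\<Sum>k<d. if mtrace {..<d} (A k) \<noteq> 0 then vec_outer (A k) p q / mtrace {..<d} (A k) else 0)"
        unfolding G_mat_def A_def[symmetric] by (subst eqK, rule sum.inter_filter) simp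
      also have "\<dots> = (\<Sum>k<d. vec_outer (A k) p q / of_real (\<rho> k))"
        by (intro sum.cong refl) (auto simp: tau)
      finally show "G_mat d (Phi i) (e i) p q = (\<Sum>k<d. vec_outer (A k) p q / of_real (\<rho> k))" .
    qed
    show ?thesis unfolding psd_on_qf
    proof
      fix v
      let ?y = "\<lambda>l. yv ?P v (M l)"
      have yA: "yv ?P v (A k) = (\<Sum>l\<in>Tk k. ?y l)" if "k < d" for k
      proof -
        have "yv ?P v (A k) = (\<Sum>p\<in>?P. \<Sum>l\<in>Tk k. cnj (v p) * M l (fst p) (snd p))"
          unfolding yv_def using that by (intro sum.cong refl) (auto simp: Aeq sum_distrib_left)
        also have "\<dots> = (\<Sum>l\<in>Tk k. ?y l)" unfolding yv_def by (rule sum.swap)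
        finally show ?thesis .
      qed
      have part: "(\<Sum>l\<in>?T. (cmod (?y l))^2 / r l) = (\<Sum>k<d. \<Sum>l\<in>Tk k. (cmod (?y l))^2 / r l)"
        unfolding Tk_def using finT T_mem i
        by (intro sum.group[symmetric]) auto
      have perk: "(cmod (yv ?P v (A k)))^2 / \<rho> k \<le> (\<Sum>l\<in>Tk k. (cmod (?y l))^2 / r l)" if "k < d" for k
      proof -
        have finTk: "finite (Tk k)" using finT by (simp add: Tk_def)
        have cs: "(cmod (\<Sum>l\<in>Tk k. ?y l))^2 \<le> \<rho> k * (\<Sum>l\<in>Tk k. (cmod (?y l))^2 / r l)"
          unfolding \<rho>_def by (rule cs_frac[OF finTk]) (auto simp: r0 y0)
        have nn: "0 \<le> (\<Sum>l\<in>Tk k. (cmod (?y l))^2 / r l)" using r0 by (intro sum_nonneg) auto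
        have rp: "\<rho> k \<ge> 0" unfolding \<rho>_def using r0 by (intro sum_nonneg) auto
        show ?thesis
        proof (cases "\<rho> k = 0")
          case True thus ?thesis using nn by simp
        next
          case False
          hence "\<rho> k > 0" using rp by simp
          thus ?thesis using cs yA[OF that] by (simp add: divide_le_eq mult.commute)
        qed
      qed
      have "qf ?P (\<lambda>p q. H p q - G_mat d (Phi i) (e i) p q) v
          = of_real ((\<Sum>l\<in>?T. (cmod (?y l))^2 / r l) - (\<Sum>k<d. (cmod (yv ?P v (A k)))^2 / \<rho> k))"
        unfolding qf_diff H'' G' qf_vo[OF finP finT] qf_vo[OF finP finite_lessThan] by simp
      moreover have "(\<Sum>k<d. (cmod (yv ?P v (A k)))^2 / \<rho> k) \<le> (\<Sum>l\<in>?T. (cmod (?y l))^2 / r l)"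
        unfolding part by (intro sum_mono perk) auto
      ultimately show "Im (qf ?P (\<lambda>p q. H p q - G_mat d (Phi i) (e i) p q) v) = 0 \<and>
          0 \<le> Re (qf ?P (\<lambda>p q. H p q - G_mat d (Phi i) (e i) p q) v)" by simp
    qed
  qed
  obtain i0 where i0: "i0 \<in> S" using Sne by auto
  let ?V = "{Re (mtrace ?P H) | H. hermitian_on ?P H \<and>
      (\<forall>i\<in>S. psd_on ?P (\<lambda>p q. H p q - G_mat d (Phi i) (e i) p q))}"
  have mem: "Re (mtrace ?P H) \<in> ?V" using herm psdG by blast
  have bdd: "bdd_below ?V"
  proof (rule bdd_belowI)
    fix x assume "x \<in> ?V"
    then obtain H1 where x: "x = Re (mtrace ?P H1)" and ps: "psd_on ?P (\<lambda>p q. H1 p q - G_mat d (Phi i0) (e i0) p q)"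
      using i0 by blast
    have "0 \<le> Re (mtrace ?P (\<lambda>p q. H1 p q - G_mat d (Phi i0) (e i0) p q))"
      using psd_trace(2)[OF finP ps] .
    thus "Re (mtrace ?P (G_mat d (Phi i0) (e i0))) \<le> x"
      unfolding x by (simp add: mtrace_def sum_subtractf)
  qed
  show ?thesis unfolding sdp_val_def
    by (rule cInf_lower2[OF mem trH bdd])
qed

end

lemma compat_val:
  assumes "finite S" "S \<noteq> {}" "\<forall>i\<in>S. onb d (e i)" "compatible d S \<Phi>"
  shows "sdp_val d \<Phi> S e \<le> real d"
proof -
  obtain Lam where ch: "channel {..<d} (tens_idx d S) Lam"
    and mg: "\<forall>i\<in>S. \<forall>X. \<forall>a<d. \<forall>b<d.
           marginal d S i (apply_map {..<d} Lam X) a b = apply_map {..<d} (\<Phi> i) X a b"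
    using assms(4) unfolding compatible_def by blast
  interpret jsetup d S e Lam \<Phi>
    using assms(1,3) ch mg by unfold_locales auto
  show ?thesis using main[OF assms(2)] .
qed

theorem theorem6p2:
  fixes d N K :: nat and \<Phi> :: "nat \<Rightarrow> (nat, nat) lmap"
  assumes "0 < d"
    and "\<forall>i\<in>{1..N}. channel {..<d} {..<d} (\<Phi> i)"
    and "1 \<le> K" and "K \<le> N"
  shows "((\<exists>S e. S \<subseteq> {1..N} \<and> card S = K \<and> (\<forall>i\<in>S. onb d (e i)) \<and> sdp_val d \<Phi> S e > real d)
            \<longrightarrow> NK_incompatible d N K \<Phi>)
       \<and> ((\<forall>S. S \<subseteq> {1..N} \<and> card S = K \<longrightarrow>
              (\<exists>e. (\<forall>i\<in>S. onb d (e i)) \<and> sdp_val d \<Phi> S e > real d))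
            \<longrightarrow> NK_strong_incompatible d N K \<Phi>)"
proof -
  have fs: "finite S" "S \<noteq> {}" if "S \<subseteq> {1..N}" "card S = K" for S :: "nat set"
    using that assms(3) finite_subset[OF that(1)] by auto
  show ?thesis
  proof (intro conjI impI)
    assume "\<exists>S e. S \<subseteq> {1..N} \<and> card S = K \<and> (\<forall>i\<in>S. onb d (e i)) \<and> sdp_val d \<Phi> S e > real d"
    then obtain S e where S: "S \<subseteq> {1..N}" "card S = K" "\<forall>i\<in>S. onb d (e i)" "sdp_val d \<Phi> S e > real d"
      by blast
    have "\<not> compatible d S \<Phi>"
      using compat_val[OF fs[OF S(1,2)] S(3)] S(4) by fastforce
    thus "NK_incompatible d N K \<Phi>" unfolding NK_incompatible_def using S by blast
  next
    assume h: "\<forall>S. S \<subseteq> {1..N} \<and> card S = K \<longrightarrow>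
              (\<exists>e. (\<forall>i\<in>S. onb d (e i)) \<and> sdp_val d \<Phi> S e > real d)"
    show "NK_strong_incompatible d N K \<Phi>" unfolding NK_strong_incompatible_def
    proof (intro allI impI)
      fix S :: "nat set" assume S: "S \<subseteq> {1..N} \<and> card S = K"
      then obtain e where e: "\<forall>i\<in>S. onb d (e i)" "sdp_val d \<Phi> S e > real d" using h by blast
      show "\<not> compatible d S \<Phi>"
        using compat_val[OF fs[of S] e(1)] S e(2) by fastforce
    qed
  qed
qed

end
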